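(* Let $x_0,\dots,x_d\in\mathbb{D}$ be distinct and $w_0,w_1\in\mathbb{C}^n$. Suppose there exists $\gamma>0$ such that $|x_0-x_1|\le\gamma$ and $\mathrm{dist}([x_0,x_1],\{x_2,\dots,x_d\})\ge2\gamma$, where $[x_0,x_1]$ is the real line segment from $x_0$ to $x_1$. Let $P$ be the unique $\mathbb{C}^n$-valued polynomial of degree at most $d$ with $P(x_0)=w_0$, $P(x_1)=w_1$, $P(x_j)=0$ for $2\le j\le d$. Then there exist constants $L_0,L_1$ depending only on $\gamma$ and $d$ such that $$\sup_{\zeta\in\mathbb{D}}\|P(\zeta)\|\le L_1\left\|\frac{w_1-w_0}{x_1-x_0}\right\|+L_0\|w_0\|.$$
   Context: $\mathbb{D}$ is the unit disk in $\mathbb{C}$ and $\|\cdot\|$ the Euclidean norm on $\mathbb{C}^n$. *)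

theory Defs
  imports "HOL-Analysis.Analysis" "HOL-Computational_Algebra.Polynomial"
begin

text \<open>Euclidean norm on C^n, vectors represented as functions nat => complex
  with components indexed by 0..n-1.\<close>
definition cvnorm :: "nat \<Rightarrow> (nat \<Rightarrow> complex) \<Rightarrow> real" where
  "cvnorm n v = L2_set (\<lambda>i. cmod (v i)) {..<n}"

end

theory Submission
  imports Defs
begin

lemma cvnorm_lin:
  fixes a b :: complex
  shows "cvnorm n (\<lambda>i. a * u i + b * v i) \<le> cmod a * cvnorm n u + cmod b * cvnorm n v"
proof -
  have "cvnorm n (\<lambda>i. a * u i + b * v i) \<le> L2_set (\<lambda>i. cmod a * cmod (u i) + cmod b * cmod (v i)) {..<n}"
    unfolding cvnorm_def
    by (rule L2_set_mono) (auto simp: norm_mult intro: norm_triangle_le)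
  also have "\<dots> \<le> L2_set (\<lambda>i. cmod a * cmod (u i)) {..<n} + L2_set (\<lambda>i. cmod b * cmod (v i)) {..<n}"
    by (rule L2_set_triangle_ineq)
  also have "\<dots> = cmod a * cvnorm n u + cmod b * cvnorm n v"
    unfolding cvnorm_def by (simp add: L2_set_right_distrib)
  finally show ?thesis .
qed

theorem lemma6p2:
  fixes \<gamma> :: real and d :: nat
  assumes "\<gamma> > 0" and "d \<ge> 1"
  shows "\<exists>L0 L1 :: real. \<forall>(n::nat) (x::nat \<Rightarrow> complex) (w0::nat \<Rightarrow> complex)
            (w1::nat \<Rightarrow> complex) (P::nat \<Rightarrow> complex poly).
     (\<forall>j\<le>d. x j \<in> ball 0 1) \<and> inj_on x {..d} \<and>
     cmod (x 0 - x 1) \<le> \<gamma> \<and>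
     (\<forall>z\<in>closed_segment (x 0) (x 1). \<forall>j\<in>{2..d}. dist z (x j) \<ge> 2 * \<gamma>) \<and>
     (\<forall>i<n. degree (P i) \<le> d \<and> poly (P i) (x 0) = w0 i \<and> poly (P i) (x 1) = w1 i \<and>
            (\<forall>j\<in>{2..d}. poly (P i) (x j) = 0))
     \<longrightarrow> (\<forall>\<zeta>\<in>ball 0 1.
           cvnorm n (\<lambda>i. poly (P i) \<zeta>)
             \<le> L1 * cvnorm n (\<lambda>i. (w1 i - w0 i) / (x 1 - x 0)) + L0 * cvnorm n w0)"
proof -
  define m where "m = card {2..d}"
  define L0 where "L0 = 1 / \<gamma> ^ m + m / \<gamma> ^ (2*m)"
  define L1 where "L1 = 2 / \<gamma> ^ m"
  show ?thesis
  proof (intro exI allI impI ballI)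
    fix n :: nat and x w0 w1 :: "nat \<Rightarrow> complex" and P :: "nat \<Rightarrow> complex poly" and \<zeta> :: complex
    assume H: "(\<forall>j\<le>d. x j \<in> ball (0::complex) 1) \<and> inj_on x {..d} \<and>
     cmod (x 0 - x 1) \<le> \<gamma> \<and>
     (\<forall>z\<in>closed_segment (x 0) (x 1). \<forall>j\<in>{2..d}. dist z (x j) \<ge> 2 * \<gamma>) \<and>
     (\<forall>i<n. degree (P i) \<le> d \<and> poly (P i) (x 0) = w0 i \<and> poly (P i) (x 1) = w1 i \<and>
            (\<forall>j\<in>{2..d}. poly (P i) (x j) = 0))"
      and z: "\<zeta> \<in> ball (0::complex) 1"
    have inb: "\<And>j. j \<le> d \<Longrightarrow> cmod (x j) < 1" using H by auto
    have inj: "inj_on x {..d}" using H by auto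
    have x01: "x 1 \<noteq> x 0" using inj assms(2) by (auto dest: inj_onD[of x _ 1 0])
    have sep: "\<And>z j. z \<in> closed_segment (x 0) (x 1) \<Longrightarrow> j \<in> {2..d} \<Longrightarrow> dist z (x j) \<ge> 2 * \<gamma>"
      using H by auto
    have Pi: "\<And>i. i < n \<Longrightarrow> degree (P i) \<le> d \<and> poly (P i) (x 0) = w0 i \<and> poly (P i) (x 1) = w1 i \<and>
            (\<forall>j\<in>{2..d}. poly (P i) (x j) = 0)" using H by auto
    define q where "q t = (\<Prod>j\<in>{2..d}. (t - x j) / 2)" for t
    define Qp where "Qp = (\<Prod>j\<in>{2..d}. [:-(x j)/2, 1/2:])"
    have polyQ: "poly Qp t = q t" for t
      unfolding Qp_def q_def by (simp add: poly_prod diff_divide_distrib)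
    have degQ: "degree Qp \<le> m"
    proof -
      have "degree Qp \<le> sum (degree \<circ> (\<lambda>j. [:-(x j)/2, 1/2:])) {2..d}"
        unfolding Qp_def by (rule degree_prod_sum_le) simp
      also have "\<dots> \<le> sum (\<lambda>j. 1) {2..d}" by (intro sum_mono) simp
      finally show ?thesis by (simp add: m_def)
    qed
    have md: "m + 1 = d" using assms(2) by (simp add: m_def)
    have qlow: "cmod (q t) \<ge> \<gamma> ^ m" if "t \<in> closed_segment (x 0) (x 1)" for t
    proof -
      have "\<gamma> ^ m = (\<Prod>j\<in>{2..d}. \<gamma>)" by (simp add: m_def)
      also have "\<dots> \<le> (\<Prod>j\<in>{2..d}. cmod ((t - x j) / 2))"
        using sep[OF that] assms(1) by (intro prod_mono) (auto simp: dist_norm mult.commute)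
      also have "\<dots> = cmod (q t)" by (simp add: q_def flip: prod_norm)
      finally show ?thesis .
    qed
    have q0: "cmod (q (x 0)) \<ge> \<gamma> ^ m" and q1: "cmod (q (x 1)) \<ge> \<gamma> ^ m"
      by (auto intro: qlow)
    have gm: "\<gamma> ^ m > 0" using assms(1) by simp
    have q0nz: "q (x 0) \<noteq> 0" and q1nz: "q (x 1) \<noteq> 0" using q0 q1 gm by auto
    have fac_le: "cmod ((t - x j) / 2) \<le> 1" if "cmod t < 1" "j \<in> {2..d}" for t j
    proof -
      have "cmod (t - x j) \<le> cmod t + cmod (x j)" by (rule norm_triangle_ineq4)
      also have "\<dots> \<le> 2" using that inb[of j] by auto
      finally show ?thesis by simp
    qed
    have qz: "cmod (q \<zeta>) \<le> 1"
    proof -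
      have "cmod (q \<zeta>) = (\<Prod>j\<in>{2..d}. cmod ((\<zeta> - x j) / 2))" by (simp add: q_def flip: prod_norm)
      also have "\<dots> \<le> (\<Prod>j\<in>{2..d}. 1)"
        using z fac_le by (intro prod_mono) auto
      finally show ?thesis by simp
    qed
    have qdiff: "cmod (q (x 0) - q (x 1)) \<le> m * cmod (x 0 - x 1) / 2"
    proof -
      have "cmod (q (x 0) - q (x 1)) \<le> (\<Sum>j\<in>{2..d}. cmod ((x 0 - x j) / 2 - (x 1 - x j) / 2))"
        unfolding q_def using inb assms(2)
        by (intro norm_prod_diff fac_le) (use inb assms(2) in auto)
      also have "\<dots> = (\<Sum>j\<in>{2..d}. cmod (x 0 - x 1) / 2)"
        by (intro sum.cong) (auto simp: diff_divide_distrib[symmetric])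
      finally show ?thesis by (simp add: m_def)
    qed
    define a where "a = q \<zeta> * (1 / q (x 0) + (\<zeta> - x 0) * (q (x 0) - q (x 1)) / ((x 1 - x 0) * q (x 0) * q (x 1)))"
    define b where "b = q \<zeta> * (\<zeta> - x 0) / q (x 1)"
    have zx0: "cmod (\<zeta> - x 0) \<le> 2"
    proof -
      have "cmod (\<zeta> - x 0) \<le> cmod \<zeta> + cmod (x 0)" by (rule norm_triangle_ineq4)
      also have "\<dots> \<le> 2" using z inb[of 0] by auto
      finally show ?thesis .
    qed
    have bb: "cmod b \<le> L1"
    proof -
      have "cmod b = cmod (q \<zeta>) * cmod (\<zeta> - x 0) / cmod (q (x 1))"
        by (simp add: b_def norm_mult norm_divide)
      also have "\<dots> \<le> 1 * 2 / \<gamma> ^ m"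
        using qz zx0 q1 gm by (intro frac_le mult_mono) auto
      finally show ?thesis by (simp add: L1_def)
    qed
    have ab: "cmod a \<le> L0"
    proof -
      have t1: "cmod (1 / q (x 0)) \<le> 1 / \<gamma> ^ m"
        using q0 gm by (simp add: norm_divide frac_le)
      have "cmod ((\<zeta> - x 0) * (q (x 0) - q (x 1)) / ((x 1 - x 0) * q (x 0) * q (x 1)))
          = cmod (\<zeta> - x 0) * (cmod (q (x 0) - q (x 1)) / cmod (x 1 - x 0)) / (cmod (q (x 0)) * cmod (q (x 1)))"
        by (simp add: norm_mult norm_divide)
      also have "\<dots> \<le> 2 * (m / 2) / (\<gamma> ^ m * \<gamma> ^ m)"
      proof (rule frac_le)
        have "cmod (q (x 0) - q (x 1)) / cmod (x 1 - x 0) \<le> real m / 2"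
          using qdiff x01 by (simp add: divide_le_eq norm_minus_commute)
        then show "cmod (\<zeta> - x 0) * (cmod (q (x 0) - q (x 1)) / cmod (x 1 - x 0)) \<le> 2 * (real m / 2)"
          using zx0 by (intro mult_mono) auto
        show "\<gamma> ^ m * \<gamma> ^ m \<le> cmod (q (x 0)) * cmod (q (x 1))"
          using q0 q1 gm by (intro mult_mono) auto
      qed (use gm in auto)
      also have "\<dots> = m / \<gamma> ^ (2*m)"
      proof -
        have "\<gamma> ^ (2*m) = \<gamma> ^ m * \<gamma> ^ m" by (simp only: mult_2 power_add)
        then show ?thesis by simp
      qed
      finally have t2: "cmod ((\<zeta> - x 0) * (q (x 0) - q (x 1)) / ((x 1 - x 0) * q (x 0) * q (x 1))) \<le> m / \<gamma> ^ (2*m)" .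
      have "cmod a \<le> cmod (q \<zeta>) * (1 / \<gamma> ^ m + m / \<gamma> ^ (2*m))"
        unfolding a_def norm_mult
        by (intro mult_left_mono norm_triangle_le add_mono t1 t2) auto
      also have "\<dots> \<le> 1 * (1 / \<gamma> ^ m + m / \<gamma> ^ (2*m))"
        using qz gm by (intro mult_right_mono) auto
      finally show ?thesis by (simp add: L0_def)
    qed
    have rep: "poly (P i) \<zeta> = a * w0 i + b * ((w1 i - w0 i) / (x 1 - x 0))" if i: "i < n" for i
    proof -
      define c where "c = (w1 i / q (x 1) - w0 i / q (x 0)) / (x 1 - x 0)"
      define R where "R = smult (w0 i / q (x 0)) Qp + smult c ([:-x 0, 1:] * Qp)"
      have polyR: "poly R t = q t * (w0 i / q (x 0) + (t - x 0) * c)" for t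
        by (simp add: R_def polyQ) (simp add: algebra_simps)
      have degR: "degree R \<le> d"
      proof -
        have "degree ([:-x 0, 1:] * Qp) \<le> d"
          using degQ md degree_mult_le[of "[:-x 0, 1:]" Qp] by simp
        moreover have "degree (smult (w0 i / q (x 0)) Qp) \<le> d" using degQ md
          by (meson degree_smult_le le_add1 le_trans)
        ultimately show ?thesis unfolding R_def
          by (meson degree_add_le degree_smult_le le_trans)
      qed
      have eq: "P i = R"
      proof (rule poly_eqI_degree[of "x ` {..d}"])
        fix t assume "t \<in> x ` {..d}"
        then obtain j where j: "j \<le> d" "t = x j" by auto
        show "poly (P i) t = poly R t"
        proof (cases "j = 0")
          case True then show ?thesis using Pi[OF i] j q0nz by (simp add: polyR)
        next
          case False
          show ?thesis
          proof (cases "j = 1")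
            case True
            have "(x 1 - x 0) * c = w1 i / q (x 1) - w0 i / q (x 0)"
              unfolding c_def using x01 by simp
            then have "poly R (x 1) = q (x 1) * (w1 i / q (x 1))"
              by (simp add: polyR)
            also have "\<dots> = w1 i" using q1nz by simp
            finally show ?thesis using Pi[OF i] j True by simp
          next
            case False
            with \<open>j \<noteq> 0\<close> j have "j \<in> {2..d}" by auto
            moreover have "q (x j) = 0" unfolding q_def using \<open>j \<in> {2..d}\<close>
              by (simp add: prod_zero_iff) (rule bexI[of _ j], auto)
            ultimately show ?thesis using Pi[OF i] j by (simp add: polyR)
          qed
        qed
      next
        show "degree (P i) < card (x ` {..d})" using Pi[OF i] card_image[OF inj] by simp
        show "degree R < card (x ` {..d})" using degR card_image[OF inj] by simp
      qed
      have x10: "x 1 - x 0 \<noteq> 0" using x01 by simp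
      have cc: "c = (w1 i - w0 i) / (x 1 - x 0) / q (x 1) + w0 i * (q (x 0) - q (x 1)) / ((x 1 - x 0) * q (x 0) * q (x 1))"
        unfolding c_def using q0nz q1nz x10
        by (simp add: divide_simps) (simp add: algebra_simps)
      show ?thesis unfolding eq polyR a_def b_def cc
        using q0nz q1nz x10 by (simp add: divide_simps) (simp add: algebra_simps)
    qed
    have "cvnorm n (\<lambda>i. poly (P i) \<zeta>) = cvnorm n (\<lambda>i. a * w0 i + b * ((w1 i - w0 i) / (x 1 - x 0)))"
      unfolding cvnorm_def by (intro L2_set_cong) (auto simp: rep)
    also have "\<dots> \<le> cmod a * cvnorm n w0 + cmod b * cvnorm n (\<lambda>i. (w1 i - w0 i) / (x 1 - x 0))"
      by (rule cvnorm_lin)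
    also have "\<dots> \<le> L0 * cvnorm n w0 + L1 * cvnorm n (\<lambda>i. (w1 i - w0 i) / (x 1 - x 0))"
      using ab bb by (intro add_mono mult_right_mono) (auto simp: cvnorm_def)
    finally show "cvnorm n (\<lambda>i. poly (P i) \<zeta>)
             \<le> L1 * cvnorm n (\<lambda>i. (w1 i - w0 i) / (x 1 - x 0)) + L0 * cvnorm n w0" by simp
  qed
qed

end
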